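(* Let $P$ be a (generic) twisted $J$-corrugated $n$-gon and let $\mathcal D\in\mathrm{DO}_n(J)$ be a difference operator corresponding to it. Then the eigenvalues of the monodromy of $P$ coincide with the roots of the polynomial $\det\mathcal D(z)$ (both being defined up to simultaneous multiplication by a common nonzero constant).
   Context: A scalar operator is a bi-infinite real sequence $a=(a_i)$ acting by $(aV)_i=a_iV_i$; $T$ is the left shift $(TV)_i=V_{i+1}$. An $n$-periodic difference operator is a finite sum $\sum_j a^{(j)}T^j$ with $n$-periodic scalar coefficients; $\mathrm{DO}_n(J)$ denotes those of the form $\sum_{j\in J}a^{(j)}T^j$. For $\mathcal D$ $n$-periodic, $\mathcal D(z)\in\mathfrak{gl}_n\otimes\mathbb R[z,z^{-1}]$ is its image under the algebra isomorphism sending a scalar operator $a$ to $\mathrm{diag}(a_1,\dots,a_n)$ and $T$ to the matrix with $1$'s in positions $(i,i+1)$ and $z$ in position $(n,1)$. A twisted $n$-gon is a sequence $v_i\in\mathbb{RP}^d$ with $v_{i+n}=M(v_i)$, $M$ a fixed projective transformation (the monodromy). For $d=\max J-\min J-1$, the polygon is $J$-corrugated if for every $i$ the points $v_{i+j}$, $j\in J$, lie in a projective subspace of dimension $|J|-2$. $\mathcal D$ corresponds to the polygon if $\mathcal DV=0$ for some lift $V_i\in\mathbb R^{d+1}\setminus\{0\}$ of $v_i$. *)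

theory Defs
  imports "Jordan_Normal_Form.Char_Poly" "Jordan_Normal_Form.Determinant"
begin

text \<open>A scalar coefficient sequence is a function int => real; a difference operator
  in DO_n(J) is given by its coefficients a j (for j in J), where a j i is the
  i-th entry of the scalar operator a^(j).  A lift of a polygon in RP^d is a
  sequence V :: int => real vec of nonzero vectors of dimension d+1.\<close>

definition periodic_seq :: "nat \<Rightarrow> (int \<Rightarrow> 'a) \<Rightarrow> bool" where
  "periodic_seq n a \<longleftrightarrow> (\<forall>i. a (i + int n) = a i)"

text \<open>d + 1 = max J - min J, i.e. the dimension of the lifts.\<close>
definition lift_dim :: "int set \<Rightarrow> nat" where
  "lift_dim J = nat (Max J - Min J)"

definition annihilates :: "int set \<Rightarrow> (int \<Rightarrow> int \<Rightarrow> real) \<Rightarrow> nat \<Rightarrow> (int \<Rightarrow> real vec) \<Rightarrow> bool" where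
  "annihilates J a dd V \<longleftrightarrow> (\<forall>i. \<forall>k<dd. (\<Sum>j\<in>J. a j i * (V (i + j) $ k)) = 0)"

text \<open>Twisted n-gon with monodromy (lifted to the invertible matrix M):
  v_{i+n} = M(v_i) in projective space, i.e. V_{i+n} is a nonzero multiple of M V_i.\<close>
definition twisted_monodromy :: "nat \<Rightarrow> (int \<Rightarrow> real vec) \<Rightarrow> real mat \<Rightarrow> bool" where
  "twisted_monodromy n V M \<longleftrightarrow> (\<forall>i. \<exists>\<mu>. \<mu> \<noteq> 0 \<and> V (i + int n) = \<mu> \<cdot>\<^sub>v (M *\<^sub>v V i))"

text \<open>J-corrugated: for every i the points v_{i+j}, j in J, lie in a projective subspace
  of dimension |J|-2, i.e. the family of lifts (V_{i+j})_{j in J} is linearly dependent.\<close>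
definition corrugated :: "int set \<Rightarrow> nat \<Rightarrow> (int \<Rightarrow> real vec) \<Rightarrow> bool" where
  "corrugated J dd V \<longleftrightarrow> (\<forall>i. \<exists>c :: int \<Rightarrow> real. (\<exists>j\<in>J. c j \<noteq> 0) \<and>
      (\<forall>k<dd. (\<Sum>j\<in>J. c j * (V (i + j) $ k)) = 0))"

text \<open>The matrix D(z) (rows/columns 1..n stored at JNF indices 0..n-1).  The entry (i,k)
  of T^j is z^((i+j-1) div n) if (i+j-1) mod n + 1 = k and 0 otherwise.  Since D(z) is a
  Laurent polynomial matrix we multiply every entry by z^s with s = nat (- (Min J div n)),
  which makes all entries polynomials; hence the polynomial below equals
  z^(n*s) * det D(z), with the same nonzero roots (and multiplicities) as det D(z).\<close>
definition DO_shift :: "int set \<Rightarrow> nat \<Rightarrow> nat" where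
  "DO_shift J n = nat (- (Min J div int n))"

definition DO_matrix_shifted :: "int set \<Rightarrow> (int \<Rightarrow> int \<Rightarrow> real) \<Rightarrow> nat \<Rightarrow> complex poly mat" where
  "DO_matrix_shifted J a n = mat n n (\<lambda>(r, c).
     (let i = int r + 1; k = int c + 1 in
       \<Sum>j\<in>{j\<in>J. (i + j - 1) mod int n + 1 = k}.
          monom (complex_of_real (a j i)) (nat ((i + j - 1) div int n + int (DO_shift J n)))))"

definition det_DO_poly :: "int set \<Rightarrow> (int \<Rightarrow> int \<Rightarrow> real) \<Rightarrow> nat \<Rightarrow> complex poly" where
  "det_DO_poly J a n = det (DO_matrix_shifted J a n)"

text \<open>Multiset of nonzero roots of det D(z) (roots of a Laurent polynomial are nonzero).\<close>
definition roots_det_DO :: "int set \<Rightarrow> (int \<Rightarrow> int \<Rightarrow> real) \<Rightarrow> nat \<Rightarrow> complex multiset" where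
  "roots_det_DO J a n = filter_mset (\<lambda>z. z \<noteq> 0) (proots (det_DO_poly J a n))"

definition eigenvalues_mset :: "real mat \<Rightarrow> complex multiset" where
  "eigenvalues_mset M = proots (char_poly (map_mat complex_of_real M))"

end

theory Submission
  imports Defs "Jordan_Normal_Form.Jordan_Normal_Form_Existence"
begin


lemma rec_unique:
  fixes J :: "int set" and a :: "int \<Rightarrow> int \<Rightarrow> real" and g :: "int \<Rightarrow> real"
  assumes fin: "finite J" and mJ: "m \<in> J" and MJ: "Mx \<in> J"
    and mmin: "\<And>j. j \<in> J \<Longrightarrow> m \<le> j" and Mmax: "\<And>j. j \<in> J \<Longrightarrow> j \<le> Mx"
    and am: "\<And>i. a m i \<noteq> 0" and aM: "\<And>i. a Mx i \<noteq> 0"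
    and eq: "\<And>i. (\<Sum>j\<in>J. a j i * g (i + j)) = 0"
    and win: "\<And>t. t0 \<le> t \<Longrightarrow> t < t0 + (Mx - m) \<Longrightarrow> g t = 0"
  shows "g t = 0"
proof -
  have fw: "\<forall>t. t0 \<le> t \<and> t < t0 + (Mx - m) + int k \<longrightarrow> g t = 0" for k
  proof (induction k)
    case 0 then show ?case using win by simp
  next
    case (Suc k)
    show ?case
    proof (intro allI impI)
      fix t assume t: "t0 \<le> t \<and> t < t0 + (Mx - m) + int (Suc k)"
      show "g t = 0"
      proof (cases "t < t0 + (Mx - m) + int k")
        case True then show ?thesis using Suc t by auto
      next
        case False
        hence tt: "t = t0 + (Mx - m) + int k" using t by auto
        define i where "i = t - Mx"
        have "0 = (\<Sum>j\<in>J. a j i * g (i + j))" using eq by simp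
        also have "\<dots> = a Mx i * g (i + Mx) + (\<Sum>j\<in>J - {Mx}. a j i * g (i + j))"
          using fin MJ by (simp add: sum.remove)
        also have "(\<Sum>j\<in>J - {Mx}. a j i * g (i + j)) = 0"
        proof (rule sum.neutral, rule ballI)
          fix j assume j: "j \<in> J - {Mx}"
          have "m \<le> j" "j < Mx" using j mmin Mmax by force+
          hence "g (i + j) = 0" using Suc t tt i_def by auto
          thus "a j i * g (i + j) = 0" by simp
        qed
        finally have "a Mx i * g t = 0" using i_def by simp
        thus ?thesis using aM by simp
      qed
    qed
  qed
  have bw: "\<forall>t. t0 - int k \<le> t \<and> t < t0 + (Mx - m) \<longrightarrow> g t = 0" for k
  proof (induction k)
    case 0 then show ?case using win by simp
  next
    case (Suc k)
    show ?case
    proof (intro allI impI)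
      fix t assume t: "t0 - int (Suc k) \<le> t \<and> t < t0 + (Mx - m)"
      show "g t = 0"
      proof (cases "t0 - int k \<le> t")
        case True then show ?thesis using Suc t by auto
      next
        case False
        hence tt: "t = t0 - int k - 1" using t by auto
        define i where "i = t - m"
        have "0 = (\<Sum>j\<in>J. a j i * g (i + j))" using eq by simp
        also have "\<dots> = a m i * g (i + m) + (\<Sum>j\<in>J - {m}. a j i * g (i + j))"
          using fin mJ by (simp add: sum.remove)
        also have "(\<Sum>j\<in>J - {m}. a j i * g (i + j)) = 0"
        proof (rule sum.neutral, rule ballI)
          fix j assume j: "j \<in> J - {m}"
          have "m < j" "j \<le> Mx" using j mmin Mmax by force+
          hence "g (i + j) = 0" using Suc t tt i_def by auto
          thus "a j i * g (i + j) = 0" by simp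
        qed
        finally have "a m i * g t = 0" using i_def by simp
        thus ?thesis using am by simp
      qed
    qed
  qed
  have "m \<le> Mx" using mmin MJ by auto
  show ?thesis
  proof (cases "t0 \<le> t")
    case True
    have "t < t0 + (Mx - m) + int (nat (t - t0) + 1)" using True \<open>m \<le> Mx\<close> by simp
    then show ?thesis using fw True by blast
  next
    case False
    have "t0 - int (nat (t0 - t)) \<le> t" by simp
    moreover have "t < t0 + (Mx - m)" using False \<open>m \<le> Mx\<close> by simp
    ultimately show ?thesis using bw by blast
  qed
qed




lemma sum_window:
  fixes J :: "int set" and h :: "int \<Rightarrow> 'b::comm_monoid_add"
  assumes fin: "finite J" and sub: "\<And>j. j \<in> J \<Longrightarrow> lo \<le> j \<and> j < lo + int p"
  shows "(\<Sum>w<p. if lo + int w \<in> J then h (lo + int w) else 0) = (\<Sum>j\<in>J. h j)"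
proof -
  have "(\<Sum>w<p. if lo + int w \<in> J then h (lo + int w) else 0) =
        (\<Sum>w\<in>{w\<in>{..<p}. lo + int w \<in> J}. h (lo + int w))"
    by (rule sum.inter_filter[symmetric]) simp
  also have "\<dots> = (\<Sum>j\<in>J. h j)"
    by (rule sum.reindex_bij_witness[where i = "\<lambda>j. nat (j - lo)" and j = "\<lambda>w. lo + int w"])
       (use sub in force)+
  finally show ?thesis .
qed

lemma prod_list_upt_map: "prod_list (map f [0..<n]) = prod f {..<n}"
  by (subst prod.distinct_set_conv_list[symmetric]) (auto simp: atLeast0LessThan)

lemma sum_split_nat: fixes f :: "nat \<Rightarrow> 'b::comm_monoid_add" shows "(\<Sum>w<N+n. f w) = (\<Sum>w<N. f w) + (\<Sum>k<n. f (N + k)::'b::comm_monoid_add)"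
  by (induction n) (auto simp: add.assoc)

locale DOset =
  fixes J :: "int set" and n :: nat and a :: "int \<Rightarrow> int \<Rightarrow> real"
  assumes finJ: "finite J" and cardJ: "2 \<le> card J" and n1: "1 \<le> n"
    and a_per: "\<forall>j\<in>J. periodic_seq n (a j)"
    and ends: "\<forall>i. a (Min J) i \<noteq> 0 \<and> a (Max J) i \<noteq> 0"
begin

abbreviation "m \<equiv> Min J"
abbreviation "Mx \<equiv> Max J"
abbreviation "N \<equiv> lift_dim J"
abbreviation "p \<equiv> n + N"

lemma J_ne: "J \<noteq> {}" using cardJ by auto
lemma mJ: "m \<in> J" using finJ J_ne by simp
lemma MJ: "Mx \<in> J" using finJ J_ne by simp
lemma mle: "j \<in> J \<Longrightarrow> m \<le> j" using finJ by simp
lemma Mge: "j \<in> J \<Longrightarrow> j \<le> Mx" using finJ by simp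
lemma m_lt_M: "m < Mx"
proof (rule ccontr)
  assume "\<not> m < Mx"
  hence "\<forall>j\<in>J. j = m" using mle Mge by force
  hence "J \<subseteq> {m}" by auto
  hence "card J \<le> 1" using card_mono[of "{m}" J] by auto
  thus False using cardJ by simp
qed
lemma N_eq: "int N = Mx - m" unfolding lift_dim_def using m_lt_M by simp
lemma N_pos: "0 < N" using N_eq m_lt_M by simp

definition tpos :: "nat \<Rightarrow> int" where "tpos w = int w + 1 + m"

definition Lr :: "real mat" where
  "Lr = mat n p (\<lambda>(r,w). if int w + m - int r \<in> J then a (int w + m - int r) (int r + 1) else 0)"

lemma Lr_sum:
  assumes r: "r < n"
  shows "(\<Sum>w<p. Lr $$ (r,w) * y (tpos w)) = (\<Sum>j\<in>J. a j (int r + 1) * y (int r + 1 + j))"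
proof -
  have "(\<Sum>w<p. Lr $$ (r,w) * y (tpos w)) =
     (\<Sum>w<p. if (m - int r) + int w \<in> J then a ((m - int r) + int w) (int r + 1) * y (int r + 1 + ((m - int r) + int w)) else 0)"
    by (rule sum.cong, auto simp: Lr_def r tpos_def algebra_simps)
  also have "\<dots> = (\<Sum>j\<in>J. a j (int r + 1) * y (int r + 1 + j))"
    by (rule sum_window[OF finJ]) (use mle Mge N_eq r in force)
  finally show ?thesis .
qed

definition T :: "real mat" where "T = mat n n (\<lambda>(r,k). Lr $$ (r, N + k))"
definition L11 :: "real mat" where "L11 = mat n N (\<lambda>(r,w). Lr $$ (r, w))"

lemma T_lower: "r < k \<Longrightarrow> k < n \<Longrightarrow> T $$ (r,k) = 0"
  unfolding T_def Lr_def using N_eq Mge by force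

lemma T_diag: "r < n \<Longrightarrow> T $$ (r,r) = a Mx (int r + 1)"
  unfolding T_def Lr_def using N_eq MJ by auto

lemma T_carrier: "T \<in> carrier_mat n n" unfolding T_def by simp

lemma det_T: "det T = (\<Prod>r<n. a Mx (int r + 1))"
proof -
  have "det T = prod_list (diag_mat T)"
    by (rule det_lower_triangular[OF _ T_carrier]) (simp add: T_lower)
  also have "\<dots> = (\<Prod>r<n. a Mx (int r + 1))"
    unfolding diag_mat_def using T_carrier T_diag
    by (simp add: prod_list_upt_map)
  finally show ?thesis .
qed

lemma det_T_nz: "det T \<noteq> 0" unfolding det_T using ends by simp

end



lemma det_nz_inverse:
  assumes A: "(A :: 'a :: field mat) \<in> carrier_mat n n" and d: "det A \<noteq> 0"
  shows "\<exists>B. B \<in> carrier_mat n n \<and> A * B = 1\<^sub>m n \<and> B * A = 1\<^sub>m n"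
  using det_non_zero_imp_unit[OF A d, of undefined] unfolding Units_def ring_mat_def by auto

context DOset begin

definition Tinv :: "real mat" where
  "Tinv = (SOME B. B \<in> carrier_mat n n \<and> T * B = 1\<^sub>m n \<and> B * T = 1\<^sub>m n)"

lemma Tinv: "Tinv \<in> carrier_mat n n" "T * Tinv = 1\<^sub>m n" "Tinv * T = 1\<^sub>m n"
  using someI_ex[OF det_nz_inverse[OF T_carrier det_T_nz]] unfolding Tinv_def by auto

definition Elow :: "real mat" where "Elow = Tinv * (- L11)"
definition E :: "real mat" where
  "E = mat p N (\<lambda>(w,c). if w < N then (if w = c then 1 else 0) else Elow $$ (w - N, c))"
definition Ar :: "real mat" where "Ar = mat N N (\<lambda>(s,c). E $$ (s + n, c))"

lemma E_top: "w < N \<Longrightarrow> c < N \<Longrightarrow> E $$ (w,c) = (if w = c then 1 else 0)"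
  unfolding E_def by (subst index_mat) auto
lemma E_bot: "k < n \<Longrightarrow> c < N \<Longrightarrow> E $$ (N + k,c) = Elow $$ (k, c)"
  unfolding E_def by (subst index_mat) auto

lemma L11_carrier: "L11 \<in> carrier_mat n N" unfolding L11_def by simp
lemma Elow_carrier: "Elow \<in> carrier_mat n N" unfolding Elow_def using Tinv L11_carrier by auto
lemma Ar_carrier: "Ar \<in> carrier_mat N N" unfolding Ar_def by simp

lemma TElow: "T * Elow = - L11"
proof -
  have "T * Elow = (T * Tinv) * (- L11)" unfolding Elow_def
    using assoc_mult_mat[OF T_carrier Tinv(1) uminus_carrier_mat[OF L11_carrier]] by simp
  also have "\<dots> = - L11" using Tinv L11_carrier by simp
  finally show ?thesis .
qed

lemma LrE: assumes r: "r < n" and c: "c < N"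
  shows "(\<Sum>w<p. Lr $$ (r,w) * E $$ (w,c)) = 0"
proof -
  have "(\<Sum>w<p. Lr $$ (r,w) * E $$ (w,c)) = (\<Sum>w<N+n. Lr $$ (r,w) * E $$ (w,c))"
    by (simp add: add.commute)
  also have "\<dots> = (\<Sum>w<N. Lr $$ (r,w) * E $$ (w,c)) + (\<Sum>k<n. Lr $$ (r,N+k) * E $$ (N+k,c))"
    by (rule sum_split_nat)
  also have "(\<Sum>w<N. Lr $$ (r,w) * E $$ (w,c)) = (\<Sum>w<N. if w = c then Lr $$ (r,w) else 0)"
    by (rule sum.cong) (use c in \<open>auto simp: E_top\<close>)
  also have "\<dots> = L11 $$ (r,c)"
    using c r by (simp add: L11_def)
  also have "(\<Sum>k<n. Lr $$ (r,N+k) * E $$ (N+k,c)) = (T * Elow) $$ (r,c)"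
    using c r Elow_carrier T_carrier
    by (simp add: E_def T_def scalar_prod_def atLeast0LessThan)
  also have "\<dots> = - L11 $$ (r,c)" unfolding TElow using r c L11_carrier by simp
  finally show ?thesis by simp
qed

lemma solution_window:
  assumes sol: "\<And>i. (\<Sum>j\<in>J. a j i * y (i + j)) = 0" and s: "s < N"
  shows "y (tpos (n + s)) = (\<Sum>c<N. Ar $$ (s,c) * y (tpos c))"
proof -
  define Yt where "Yt = vec N (\<lambda>c. y (tpos c))"
  define Yl where "Yl = vec n (\<lambda>k. y (tpos (N + k)))"
  have Yt: "Yt \<in> carrier_vec N" and Yl: "Yl \<in> carrier_vec n" unfolding Yt_def Yl_def by auto
  have eq0: "T *\<^sub>v Yl = - (L11 *\<^sub>v Yt)"
  proof (rule eq_vecI)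
    fix r assume r: "r < dim_vec (- (L11 *\<^sub>v Yt))"
    hence r: "r < n" using L11_carrier by simp
    have "0 = (\<Sum>w<p. Lr $$ (r,w) * y (tpos w))" using Lr_sum[OF r] sol by simp
    also have "\<dots> = (\<Sum>w<N+n. Lr $$ (r,w) * y (tpos w))" by (simp add: add.commute)
    also have "\<dots> = (\<Sum>w<N. Lr $$ (r,w) * y (tpos w)) + (\<Sum>k<n. Lr $$ (r,N+k) * y (tpos (N+k)))"
      by (rule sum_split_nat)
    also have "(\<Sum>w<N. Lr $$ (r,w) * y (tpos w)) = (L11 *\<^sub>v Yt) $ r"
      using r L11_carrier by (simp add: Yt_def L11_def scalar_prod_def atLeast0LessThan)
    also have "(\<Sum>k<n. Lr $$ (r,N+k) * y (tpos (N+k))) = (T *\<^sub>v Yl) $ r"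
      using r T_carrier by (simp add: Yl_def T_def scalar_prod_def atLeast0LessThan)
    finally show "(T *\<^sub>v Yl) $ r = (- (L11 *\<^sub>v Yt)) $ r" using r L11_carrier
      by (simp add: eq_neg_iff_add_eq_0 add.commute)
  qed (use T_carrier L11_carrier in auto)
  have Ylow: "Yl = Elow *\<^sub>v Yt"
  proof -
    have "Yl = (Tinv * T) *\<^sub>v Yl" using Tinv Yl by simp
    also have "\<dots> = Tinv *\<^sub>v (T *\<^sub>v Yl)" using Tinv T_carrier Yl by (metis assoc_mult_mat_vec)
    also have "\<dots> = Tinv *\<^sub>v (- (L11 *\<^sub>v Yt))" by (simp add: eq0)
    also have "- (L11 *\<^sub>v Yt) = (- L11) *\<^sub>v Yt" using L11_carrier Yt by simp
    also have "Tinv *\<^sub>v \<dots> = Elow *\<^sub>v Yt" unfolding Elow_def using Tinv L11_carrier Yt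
      using assoc_mult_mat_vec[OF Tinv(1) uminus_carrier_mat[OF L11_carrier] Yt] by simp
    finally show ?thesis .
  qed
  show ?thesis
  proof (cases "n + s < N")
    case True
    have "(\<Sum>c<N. Ar $$ (s,c) * y (tpos c)) = (\<Sum>c<N. if c = n + s then y (tpos c) else 0)"
    proof (rule sum.cong)
      fix c assume c: "c \<in> {..<N}"
      have "Ar $$ (s,c) = E $$ (n + s, c)" using c s unfolding Ar_def by (simp add: add.commute)
      also have "\<dots> = (if n + s = c then 1 else 0)" using E_top True c by simp
      finally show "Ar $$ (s,c) * y (tpos c) = (if c = n + s then y (tpos c) else 0)" by auto
    qed simp
    then show ?thesis using True by simp
  next
    case False
    define k where "k = n + s - N"
    have k: "k < n" "n + s = N + k" using False s k_def by auto
    have "(\<Sum>c<N. Ar $$ (s,c) * y (tpos c)) = (\<Sum>c<N. Elow $$ (k,c) * y (tpos c))"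
    proof (rule sum.cong)
      fix c assume c: "c \<in> {..<N}"
      have sn: "s + n = N + k" using k(2) by simp
      have "Ar $$ (s,c) = E $$ (s + n, c)" using c s unfolding Ar_def by simp
      also have "\<dots> = Elow $$ (k,c)" unfolding sn using E_bot k c by simp
      finally show "Ar $$ (s,c) * y (tpos c) = Elow $$ (k,c) * y (tpos c)" by simp
    qed simp
    also have "\<dots> = (Elow *\<^sub>v Yt) $ k"
      using k Elow_carrier by (simp add: Yt_def scalar_prod_def atLeast0LessThan)
    also have "\<dots> = y (tpos (n + s))" unfolding Ylow[symmetric] using k(1) unfolding k(2) by (simp add: Yl_def)
    finally show ?thesis by simp
  qed
qed

end



lemma mult_entry:
  assumes "A \<in> carrier_mat nr k" "B \<in> carrier_mat k nc" "i < nr" "j < nc"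
  shows "(A * B) $$ (i,j) = (\<Sum>w<k. A $$ (i,w) * B $$ (w,j))"
  using assms by (simp add: scalar_prod_def atLeast0LessThan)

lemma sum_two_delta:
  fixes f :: "nat \<Rightarrow> 'b::comm_ring_1"
  assumes "s < P" "t < P" "s \<noteq> t"
  shows "(\<Sum>w<P. ((if w = s then X else 0) - (if w = t then 1 else 0)) * f w) = X * f s - f t"
proof -
  have "(\<Sum>w<P. ((if w = s then X else 0) - (if w = t then 1 else 0)) * f w) =
     (\<Sum>w<P. (if w = s then X * f w else 0) - (if w = t then f w else 0))"
    by (rule sum.cong) (use assms in auto)
  also have "\<dots> = X * f s - f t" using assms by (simp add: sum_subtractf)
  finally show ?thesis .
qed

abbreviation cp :: "real \<Rightarrow> complex poly" where "cp c \<equiv> [:complex_of_real c:]"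

lemma sum_cp: "(\<Sum>w\<in>A. cp (f w)) = cp (\<Sum>w\<in>A. f w)"
  by (induction A rule: infinite_finite_induct) auto

context DOset begin

definition Lp :: "complex poly mat" where
  "Lp = mat p p (\<lambda>(i,w). if i < n then cp (Lr $$ (i,w))
        else (if w = i - n then [:0,1:] else 0) - (if w = i then 1 else 0))"

lemma Lp_carrier: "Lp \<in> carrier_mat p p" unfolding Lp_def by simp

lemma Lp_top: "i < n \<Longrightarrow> w < p \<Longrightarrow> Lp $$ (i,w) = cp (Lr $$ (i,w))"
  unfolding Lp_def by simp

lemma Lp_bot: "s < N \<Longrightarrow> w < p \<Longrightarrow>
   Lp $$ (n + s,w) = (if w = s then [:0,1:] else 0) - (if w = n + s then 1 else 0)"
  unfolding Lp_def by simp

lemma Lp_bot_sum: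
  assumes s: "s < N"
  shows "(\<Sum>w<p. Lp $$ (n + s,w) * f w) = [:0,1:] * f s - f (n + s)"
proof -
  have "(\<Sum>w<p. Lp $$ (n + s,w) * f w) =
        (\<Sum>w<p. ((if w = s then [:0,1:] else 0) - (if w = n + s then 1 else 0)) * f w)"
    by (rule sum.cong) (auto simp: Lp_bot s)
  also have "\<dots> = [:0,1:] * f s - f (n + s)"
    by (rule sum_two_delta) (use s n1 in auto)
  finally show ?thesis .
qed

definition Qb :: "complex poly mat" where
  "Qb = mat p p (\<lambda>(w,c). if c < n then (if w = N + c then 1 else 0) else cp (E $$ (w, c - n)))"
definition Tp :: "complex poly mat" where "Tp = map_mat cp T"
definition Acx :: "complex mat" where "Acx = map_mat complex_of_real Ar"
definition C21 :: "complex poly mat" where "C21 = mat N n (\<lambda>(s,c). Lp $$ (n + s, N + c))"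

lemma Qb_carrier: "Qb \<in> carrier_mat p p" unfolding Qb_def by simp
lemma Acx_carrier: "Acx \<in> carrier_mat N N" unfolding Acx_def using Ar_carrier by simp

lemma LpQb: "Lp * Qb = four_block_mat Tp (0\<^sub>m n N) C21 (char_poly_matrix Acx)"
proof (rule eq_matI)
  fix i c assume i: "i < dim_row (four_block_mat Tp (0\<^sub>m n N) C21 (char_poly_matrix Acx))"
    and c: "c < dim_col (four_block_mat Tp (0\<^sub>m n N) C21 (char_poly_matrix Acx))"
  have Tp: "Tp \<in> carrier_mat n n" unfolding Tp_def using T_carrier by simp
  have C21: "C21 \<in> carrier_mat N n" unfolding C21_def by simp
  have i: "i < p" and c: "c < p" using i c Tp C21 char_poly_matrix_closed[OF Acx_carrier] by auto
  have e: "(Lp * Qb) $$ (i,c) = (\<Sum>w<p. Lp $$ (i,w) * Qb $$ (w,c))"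
    by (rule mult_entry[OF Lp_carrier Qb_carrier i c])
  show "(Lp * Qb) $$ (i,c) = four_block_mat Tp (0\<^sub>m n N) C21 (char_poly_matrix Acx) $$ (i,c)"
  proof (cases "c < n")
    case True
    have "(\<Sum>w<p. Lp $$ (i,w) * Qb $$ (w,c)) = (\<Sum>w<p. if w = N + c then Lp $$ (i,w) else 0)"
      by (rule sum.cong) (use c True in \<open>auto simp: Qb_def\<close>)
    also have "\<dots> = Lp $$ (i, N + c)" using True by simp
    finally have ee: "(Lp * Qb) $$ (i,c) = Lp $$ (i, N + c)" using e by simp
    show ?thesis
    proof (cases "i < n")
      case True2: True
      show ?thesis unfolding ee using True True2 Tp C21 Acx_carrier T_carrier
        by (simp add: Lp_top Tp_def T_def)
    next
      case False
      then obtain s where s: "i = n + s" "s < N" using i by (metis add_less_cancel_left le_Suc_ex not_le)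
      show ?thesis unfolding ee using True s Tp C21 char_poly_matrix_closed[OF Acx_carrier] by (simp add: C21_def)
    qed
  next
    case False
    then obtain c' where c': "c = n + c'" "c' < N" using c by (metis add_less_cancel_left le_Suc_ex not_le)
    have Q: "w < p \<Longrightarrow> Qb $$ (w, c) = cp (E $$ (w, c'))" for w using c' unfolding Qb_def by simp
    show ?thesis
    proof (cases "i < n")
      case True
      have "(\<Sum>w<p. Lp $$ (i,w) * Qb $$ (w,c)) = (\<Sum>w<p. cp (Lr $$ (i,w) * E $$ (w,c')))"
        by (rule sum.cong) (auto simp: Q Lp_top True)
      also have "\<dots> = 0" unfolding sum_cp LrE[OF True c'(2)] by simp
      finally show ?thesis using e True c' Tp C21 char_poly_matrix_closed[OF Acx_carrier] by simp
    next
      case False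
      then obtain s where s: "i = n + s" "s < N" using i by (metis add_less_cancel_left le_Suc_ex not_le)
      have "(\<Sum>w<p. Lp $$ (i,w) * Qb $$ (w,c)) = (\<Sum>w<p. Lp $$ (n + s,w) * cp (E $$ (w, c')))"
        by (rule sum.cong) (auto simp: Q s)
      also have "\<dots> = [:0,1:] * cp (E $$ (s, c')) - cp (E $$ (n + s, c'))"
        by (rule Lp_bot_sum[OF s(2)])
      also have "\<dots> = char_poly_matrix Acx $$ (s, c')"
        using s c' Acx_carrier by (simp add: char_poly_matrix_def E_top Acx_def Ar_def add.commute)
      finally show ?thesis using e s c' Tp C21 char_poly_matrix_closed[OF Acx_carrier] by simp
    qed
  qed
qed (use T_carrier char_poly_matrix_closed[OF Acx_carrier] in \<open>auto simp: Lp_def Qb_def Tp_def C21_def\<close>)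

end



context DOset begin

lemma Tp_carrier: "Tp \<in> carrier_mat n n" unfolding Tp_def using T_carrier by simp
lemma C21_carrier: "C21 \<in> carrier_mat N n" unfolding C21_def by simp

lemma det_LpQb: "det (Lp * Qb) = det Tp * char_poly Acx"
  unfolding LpQb char_poly_def
  by (rule det_four_block_mat_upper_right_zero[OF Tp_carrier refl C21_carrier char_poly_matrix_closed[OF Acx_carrier]])

lemma det_Tp_eq: "det Tp = (\<Prod>r<n. cp (a Mx (int r + 1)))"
proof -
  have "det Tp = prod_list (diag_mat Tp)"
    by (rule det_lower_triangular[OF _ Tp_carrier]) (use T_carrier T_lower in \<open>simp add: Tp_def\<close>)
  also have "\<dots> = (\<Prod>r<n. cp (a Mx (int r + 1)))"
    unfolding diag_mat_def using Tp_carrier T_carrier T_diag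
    by (simp add: prod_list_upt_map Tp_def)
  finally show ?thesis .
qed

lemma det_Tp_poly: "poly (det Tp) y \<noteq> 0"
  unfolding det_Tp_eq poly_prod using ends by simp

lemma det_Tp_nz: "det Tp \<noteq> 0" using det_Tp_poly[of 0] by auto

definition Elp :: "complex poly mat" where "Elp = mat n N (\<lambda>(k,c). cp (Elow $$ (k,c)))"
lemma Elp_carrier: "Elp \<in> carrier_mat n N" unfolding Elp_def by simp

lemma Qb_block: "Qb = four_block_mat (0\<^sub>m N n) (1\<^sub>m N) (1\<^sub>m n) Elp"
proof (rule eq_matI)
  fix w c assume w: "w < dim_row (four_block_mat (0\<^sub>m N n) (1\<^sub>m N) (1\<^sub>m n) Elp)"
    and c: "c < dim_col (four_block_mat (0\<^sub>m N n) (1\<^sub>m N) (1\<^sub>m n) Elp)"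
  hence w: "w < p" and c: "c < p" using Elp_carrier by auto
  show "Qb $$ (w,c) = four_block_mat (0\<^sub>m N n) (1\<^sub>m N) (1\<^sub>m n) Elp $$ (w,c)"
  proof (cases "w < N")
    case True
    then show ?thesis using w c Elp_carrier by (simp add: Qb_def E_top)
  next
    case False
    then obtain k where k: "w = N + k" "k < n" using w by (metis add.commute add_less_cancel_left le_Suc_ex not_le)
    show ?thesis using w c k Elp_carrier by (simp add: Qb_def E_bot Elp_def)
  qed
qed (use Elp_carrier in \<open>auto simp: Qb_def\<close>)

lemma det_Qb_unit: "\<exists>q. det Qb * q = 1"
proof -
  define Q' where "Q' = four_block_mat (- Elp) (1\<^sub>m n) (1\<^sub>m N) (0\<^sub>m N n)"
  have z1: "- 0\<^sub>m N N + 1\<^sub>m N = (1\<^sub>m N :: complex poly mat)" by (rule eq_matI) auto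
  have Q': "Q' \<in> carrier_mat p p" unfolding Q'_def using Elp_carrier by auto
  have "Qb * Q' = four_block_mat (0\<^sub>m N n * - Elp + 1\<^sub>m N * 1\<^sub>m N) (0\<^sub>m N n * 1\<^sub>m n + 1\<^sub>m N * 0\<^sub>m N n)
    (1\<^sub>m n * - Elp + Elp * 1\<^sub>m N) (1\<^sub>m n * 1\<^sub>m n + Elp * 0\<^sub>m N n)"
    unfolding Qb_block Q'_def
    by (rule mult_four_block_mat) (use Elp_carrier in auto)
  also have "\<dots> = four_block_mat (1\<^sub>m N) (0\<^sub>m N n) (0\<^sub>m n N) (1\<^sub>m n)"
    using Elp_carrier by (simp add: z1)
  also have "\<dots> = 1\<^sub>m p" by (simp add: add.commute)
  finally have "Qb * Q' = 1\<^sub>m p" .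
  hence "det Qb * det Q' = 1" using det_mult[OF Qb_carrier Q'] by simp
  thus ?thesis by auto
qed

lemma det_Qb_poly: "poly (det Qb) y \<noteq> 0"
proof -
  obtain q where "det Qb * q = 1" using det_Qb_unit by blast
  hence "poly (det Qb) y * poly q y = 1" by (metis poly_1 poly_mult)
  thus ?thesis by auto
qed

end



lemma cp_monom: "cp x * monom 1 e = monom (complex_of_real x) e"
  by (metis monom_0 mult_monom mult.right_neutral add_0)

lemma x_monom: "[:0,1:] * monom (1::'a::comm_ring_1) e = monom 1 (Suc e)"
  by (simp add: monom_Suc)

context DOset begin

definition sh :: int where "sh = int (DO_shift J n)"
definition resw :: "nat \<Rightarrow> int" where "resw w = (tpos w - 1) mod int n"
definition expo :: "nat \<Rightarrow> nat" where "expo w = nat ((tpos w - 1) div int n + sh)"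
definition G :: "complex poly mat" where
  "G = mat p n (\<lambda>(w,k). if resw w = int k then monom 1 (expo w) else 0)"
definition Q2 :: "complex poly mat" where
  "Q2 = mat p p (\<lambda>(w,c). if c < n then G $$ (w,c) else (if w = c then 1 else 0))"
abbreviation "Dsh \<equiv> DO_matrix_shifted J a n"
definition B12 :: "complex poly mat" where "B12 = mat n N (\<lambda>(i,c). Lp $$ (i, n + c))"
definition Ld :: "complex poly mat" where "Ld = mat N N (\<lambda>(s,c). Lp $$ (n + s, n + c))"

lemma expo_nonneg: "0 \<le> (int w + m) div int n + sh"
proof -
  have "m div int n \<le> (int w + m) div int n" by (rule zdiv_mono1) (use n1 in auto)
  moreover have "- (m div int n) \<le> sh" unfolding sh_def DO_shift_def by simp
  ultimately show ?thesis by simp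
qed

lemma tpos1: "tpos w - 1 = int w + m" unfolding tpos_def by simp

lemma G_shift: "resw (n + s) = resw s" "expo (n + s) = Suc (expo s)"
proof -
  have t: "tpos (n + s) - 1 = (tpos s - 1) + int n" unfolding tpos_def by simp
  show "resw (n + s) = resw s" unfolding resw_def t by simp
  have "(tpos s - 1 + int n) div int n = (tpos s - 1) div int n + 1" using n1 by simp
  thus "expo (n + s) = Suc (expo s)" unfolding expo_def t using expo_nonneg[of s] tpos1[of s] by simp
qed

lemma G_index: "w < p \<Longrightarrow> k < n \<Longrightarrow> G $$ (w,k) = (if resw w = int k then monom 1 (expo w) else 0)"
  unfolding G_def by simp

lemma a2: assumes s: "s < N" and c: "c < n"
  shows "(\<Sum>w<p. Lp $$ (n + s, w) * G $$ (w,c)) = 0"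
  unfolding Lp_bot_sum[OF s] using s c G_shift[of s] by (simp add: G_index monom_Suc)

lemma a1: assumes i: "i < n" and c: "c < n"
  shows "(\<Sum>w<p. Lp $$ (i, w) * G $$ (w,c)) = Dsh $$ (i,c)"
proof -
  define F where "F j = (if (int i + j) mod int n = int c then
      monom (complex_of_real (a j (int i + 1))) (nat ((int i + j) div int n + sh)) else 0)" for j
  have "(\<Sum>w<p. Lp $$ (i, w) * G $$ (w,c)) =
     (\<Sum>w<p. if (m - int i) + int w \<in> J then F ((m - int i) + int w) else 0)"
  proof (rule sum.cong)
    fix w assume w: "w \<in> {..<p}"
    have e: "int i + (m - int i + int w) = tpos w - 1" unfolding tpos_def by simp
    show "Lp $$ (i, w) * G $$ (w,c) = (if (m - int i) + int w \<in> J then F ((m - int i) + int w) else 0)"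
      using w i c unfolding F_def e
      by (auto simp: Lp_top G_index Lr_def resw_def expo_def cp_monom smult_monom algebra_simps)
  qed simp
  also have "\<dots> = (\<Sum>j\<in>J. F j)"
    by (rule sum_window[OF finJ]) (use mle Mge N_eq i in force)
  also have "\<dots> = Dsh $$ (i,c)"
    unfolding DO_matrix_shifted_def using i c
    by (simp add: sum.inter_filter[OF finJ] F_def sh_def cong: if_cong)
  finally show ?thesis .
qed

end



context DOset begin

lemma Dsh_carrier: "Dsh \<in> carrier_mat n n" unfolding DO_matrix_shifted_def by simp
lemma B12_carrier: "B12 \<in> carrier_mat n N" unfolding B12_def by simp
lemma Ld_carrier: "Ld \<in> carrier_mat N N" unfolding Ld_def by simp
lemma Q2_carrier: "Q2 \<in> carrier_mat p p" unfolding Q2_def by simp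

lemma LpQ2: "Lp * Q2 = four_block_mat Dsh B12 (0\<^sub>m N n) Ld"
proof (rule eq_matI)
  fix i c assume i: "i < dim_row (four_block_mat Dsh B12 (0\<^sub>m N n) Ld)"
    and c: "c < dim_col (four_block_mat Dsh B12 (0\<^sub>m N n) Ld)"
  have i: "i < p" and c: "c < p" using i c Dsh_carrier Ld_carrier by auto
  have e: "(Lp * Q2) $$ (i,c) = (\<Sum>w<p. Lp $$ (i,w) * Q2 $$ (w,c))"
    by (rule mult_entry[OF Lp_carrier Q2_carrier i c])
  show "(Lp * Q2) $$ (i,c) = four_block_mat Dsh B12 (0\<^sub>m N n) Ld $$ (i,c)"
  proof (cases "c < n")
    case True
    have "(\<Sum>w<p. Lp $$ (i,w) * Q2 $$ (w,c)) = (\<Sum>w<p. Lp $$ (i,w) * G $$ (w,c))"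
      by (rule sum.cong) (use c True in \<open>auto simp: Q2_def\<close>)
    show ?thesis
    proof (cases "i < n")
      case True2: True
      show ?thesis using e a1[OF True2 True] True True2 Dsh_carrier Ld_carrier
        \<open>(\<Sum>w<p. Lp $$ (i,w) * Q2 $$ (w,c)) = _\<close> by simp
    next
      case False
      then obtain s where s: "i = n + s" "s < N" using i by (metis add_less_cancel_left le_Suc_ex not_le)
      show ?thesis using e a2[OF s(2) True] s True Dsh_carrier Ld_carrier
        \<open>(\<Sum>w<p. Lp $$ (i,w) * Q2 $$ (w,c)) = _\<close> by simp
    qed
  next
    case False
    then obtain c' where c': "c = n + c'" "c' < N" using c by (metis add_less_cancel_left le_Suc_ex not_le)
    have "(\<Sum>w<p. Lp $$ (i,w) * Q2 $$ (w,c)) = (\<Sum>w<p. if w = c then Lp $$ (i,w) else 0)"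
      by (rule sum.cong) (use c False in \<open>auto simp: Q2_def\<close>)
    also have "\<dots> = Lp $$ (i,c)" using c by simp
    finally have ee: "(Lp * Q2) $$ (i,c) = Lp $$ (i,c)" using e by simp
    show ?thesis
    proof (cases "i < n")
      case True
      show ?thesis unfolding ee using True c' Dsh_carrier Ld_carrier by (simp add: B12_def)
    next
      case False
      then obtain s where s: "i = n + s" "s < N" using i by (metis add_less_cancel_left le_Suc_ex not_le)
      show ?thesis unfolding ee using s c' Dsh_carrier Ld_carrier by (simp add: Ld_def)
    qed
  qed
qed (use Dsh_carrier Ld_carrier in \<open>auto simp: Lp_def Q2_def\<close>)

lemma det_Ld: "det Ld = (-1) ^ N"
proof -
  have "det Ld = prod_list (diag_mat Ld)"
  proof (rule det_lower_triangular[OF _ Ld_carrier])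
    fix s c assume "s < c" "c < N"
    thus "Ld $$ (s,c) = 0" by (simp add: Ld_def Lp_bot)
  qed
  also have "\<dots> = (\<Prod>s<N. -1)"
    unfolding diag_mat_def using Ld_carrier n1 by (simp add: prod_list_upt_map Ld_def Lp_bot)
  finally show ?thesis by simp
qed

lemma det_LpQ2: "det (Lp * Q2) = det Dsh * (-1) ^ N"
  unfolding LpQ2 det_Ld[symmetric]
  by (rule det_four_block_mat_lower_left_zero[OF Dsh_carrier B12_carrier refl Ld_carrier])

definition Gt :: "complex poly mat" where "Gt = mat n n (\<lambda>(w,k). G $$ (w,k))"
definition Gb :: "complex poly mat" where "Gb = mat N n (\<lambda>(s,k). G $$ (n + s,k))"
lemma Gt_carrier: "Gt \<in> carrier_mat n n" unfolding Gt_def by simp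

lemma Q2_block: "Q2 = four_block_mat Gt (0\<^sub>m n N) Gb (1\<^sub>m N)"
  by (rule eq_matI) (auto simp: Q2_def Gt_def Gb_def)

lemma det_Q2: "det Q2 = det Gt"
  unfolding Q2_block
  by (subst det_four_block_mat_upper_right_zero[OF Gt_carrier refl]) (auto simp: Gb_def)

end



context DOset begin

lemma resw_range: "0 \<le> resw w" "resw w < int n" unfolding resw_def using n1 by auto

lemma resw_inj: assumes "w < n" "w' < n" "resw w = resw w'" shows "w = w'"
proof -
  have "(int w + m) mod int n = (int w' + m) mod int n" using assms(3) unfolding resw_def tpos1 .
  hence "int n dvd (int w + m) - (int w' + m)" by (simp add: mod_eq_dvd_iff)
  hence d: "int n dvd int w - int w'" by simp
  show ?thesis
  proof (rule ccontr)
    assume "w \<noteq> w'"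
    hence "int w - int w' \<noteq> 0" by simp
    hence "\<bar>int n\<bar> \<le> \<bar>int w - int w'\<bar>" using d by (rule dvd_imp_le_int)
    thus False using assms by auto
  qed
qed

definition K :: nat where "K = (\<Sum>w<n. expo w)"
definition Gp :: "complex poly mat" where
  "Gp = mat n n (\<lambda>(k,w). if resw w = int k then monom 1 (K - expo w) else 0)"

lemma GtGp: "Gt * Gp = monom 1 K \<cdot>\<^sub>m 1\<^sub>m n"
proof (rule eq_matI)
  fix w w' assume w: "w < dim_row (monom 1 K \<cdot>\<^sub>m 1\<^sub>m n)" and w': "w' < dim_col (monom 1 K \<cdot>\<^sub>m 1\<^sub>m n)"
  hence w: "w < n" and w': "w' < n" by auto
  define k0 where "k0 = nat (resw w)"
  have k0: "k0 < n" "resw w = int k0" using resw_range[of w] unfolding k0_def by auto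
  have "(Gt * Gp) $$ (w,w') = (\<Sum>k<n. Gt $$ (w,k) * Gp $$ (k,w'))"
    by (rule mult_entry[OF Gt_carrier _ w w']) (simp add: Gp_def)
  also have "\<dots> = (\<Sum>k<n. if k = k0 then (if resw w' = int k0 then monom 1 (expo w) * monom 1 (K - expo w') else 0) else 0)"
    by (rule sum.cong) (use w w' k0 in \<open>auto simp: Gt_def Gp_def G_index\<close>)
  also have "\<dots> = (if resw w' = resw w then monom 1 (expo w) * monom 1 (K - expo w') else 0)"
    using k0 by simp
  also have "\<dots> = (if w = w' then monom 1 K else 0)"
  proof (cases "w = w'")
    case True
    have "expo w \<le> K" unfolding K_def using w by (intro member_le_sum) auto
    then show ?thesis using True by (simp add: mult_monom)
  next
    case False
    then show ?thesis using resw_inj[OF w' w] by auto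
  qed
  finally show "(Gt * Gp) $$ (w,w') = (monom 1 K \<cdot>\<^sub>m 1\<^sub>m n) $$ (w,w')" using w w' by simp
qed (auto simp: Gt_def Gp_def)

lemma det_Gt: "det Gt \<noteq> 0" "\<And>z. z \<noteq> 0 \<Longrightarrow> poly (det Gt) z \<noteq> 0"
proof -
  have Gp: "Gp \<in> carrier_mat n n" unfolding Gp_def by simp
  have "det Gt * det Gp = monom 1 K ^ n"
    using det_mult[OF Gt_carrier Gp] unfolding GtGp by simp
  hence e: "det Gt * det Gp = monom 1 (K * n)" by (simp add: monom_power mult.commute)
  thus "det Gt \<noteq> 0" by auto
  fix z :: complex assume z: "z \<noteq> 0"
  have "poly (det Gt) z * poly (det Gp) z = z ^ (K * n)"
    using arg_cong[OF e, of "\<lambda>q. poly q z"] by (simp add: poly_monom)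
  thus "poly (det Gt) z \<noteq> 0" using z by auto
qed

end



lemma sum_if_const: "(\<Sum>c\<in>A. if P then f c else 0) = (if P then (\<Sum>c\<in>A. f c) else 0)"
  by auto

lemma inv_of_invertible:
  assumes M: "M \<in> carrier_mat n n" and inv: "invertible_mat (M :: 'a :: comm_ring_1 mat)"
  shows "\<exists>B. B \<in> carrier_mat n n \<and> M * B = 1\<^sub>m n \<and> B * M = 1\<^sub>m n"
proof -
  from inv obtain B where B: "M * B = 1\<^sub>m (dim_row M)" "B * M = 1\<^sub>m (dim_row B)"
    unfolding invertible_mat_def inverts_mat_def by auto
  have "dim_col (M * B) = dim_col (1\<^sub>m (dim_row M))" using B(1) by simp
  hence "dim_col B = n" using M by simp
  moreover have "dim_col (B * M) = dim_col (1\<^sub>m (dim_row B))" using B(2) by simp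
  hence "dim_row B = n" using M by simp
  ultimately show ?thesis using B M by (intro exI[of _ B]) auto
qed

lemma invertible_of_inverse:
  assumes "M \<in> carrier_mat n n" "B \<in> carrier_mat n n" "M * B = 1\<^sub>m n" "B * M = 1\<^sub>m n"
  shows "invertible_mat M"
  using assms unfolding invertible_mat_def inverts_mat_def square_mat.simps by auto

locale Mono = DOset +
  fixes V :: "int \<Rightarrow> real vec" and M :: "real mat"
  assumes V_dim: "\<forall>i. V i \<in> carrier_vec (lift_dim J)"
    and V_nonzero: "\<forall>i. V i \<noteq> 0\<^sub>v (lift_dim J)"
    and M_car: "M \<in> carrier_mat (lift_dim J) (lift_dim J)" and M_inv: "invertible_mat M"
    and twisted: "twisted_monodromy n V M"
    and ann: "annihilates J a (lift_dim J) V"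
    and generic: "\<forall>M'. M' \<in> carrier_mat (lift_dim J) (lift_dim J) \<longrightarrow>
            invertible_mat M' \<longrightarrow> twisted_monodromy n V M' \<longrightarrow>
            (\<exists>c. c \<noteq> 0 \<and> M' = c \<cdot>\<^sub>m M)"
begin

lemma V_car[simp]: "V i \<in> carrier_vec N" using V_dim by blast
lemma V_dimv[simp]: "dim_vec (V i) = N" by (rule carrier_vecD[OF V_car])

lemma sol_comb: "(\<Sum>j\<in>J. a j i * (\<Sum>k<N. cf k * V (i + j) $ k)) = 0"
proof -
  have "(\<Sum>j\<in>J. a j i * (\<Sum>k<N. cf k * V (i + j) $ k)) = (\<Sum>k<N. cf k * (\<Sum>j\<in>J. a j i * V (i + j) $ k))"
  proof -
    have "(\<Sum>j\<in>J. a j i * (\<Sum>k<N. cf k * V (i + j) $ k)) = (\<Sum>j\<in>J. \<Sum>k<N. a j i * (cf k * V (i + j) $ k))"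
      by (simp add: sum_distrib_left)
    also have "\<dots> = (\<Sum>k<N. \<Sum>j\<in>J. a j i * (cf k * V (i + j) $ k))" by (rule sum.swap)
    also have "\<dots> = (\<Sum>k<N. cf k * (\<Sum>j\<in>J. a j i * V (i + j) $ k))"
      by (rule sum.cong) (auto simp: sum_distrib_left mult.left_commute)
    finally show ?thesis .
  qed
  also have "\<dots> = 0" using ann unfolding annihilates_def by simp
  finally show ?thesis .
qed

lemma sol_uniq:
  assumes sol: "\<And>i. (\<Sum>j\<in>J. a j i * y (i + j)) = 0" and win: "\<And>c. c < N \<Longrightarrow> y (tpos c) = 0"
  shows "y t = 0"
proof (rule rec_unique[OF finJ mJ MJ mle Mge _ _ sol, of "1 + m"])
  show "\<And>i. a m i \<noteq> 0" "\<And>i. a Mx i \<noteq> 0" using ends by auto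
  fix t assume "1 + m \<le> t" "t < 1 + m + (Mx - m)"
  moreover have "tpos (nat (t - (1 + m))) = t" using calculation unfolding tpos_def by simp
  ultimately show "y t = 0" using win[of "nat (t - (1 + m))"] N_eq by simp
qed

lemma hyperplane_contra:
  assumes v: "v \<in> carrier_vec N" "v \<noteq> 0\<^sub>v N" and orth: "\<And>i. (\<Sum>k<N. v $ k * V i $ k) = 0"
  shows False
proof -
  have "\<exists>k0<N. v $ k0 \<noteq> 0"
  proof (rule ccontr)
    assume "\<not> ?thesis"
    hence "v = 0\<^sub>v N" using v(1) by (intro eq_vecI) auto
    thus False using v(2) by simp
  qed
  then obtain k0 where k0: "k0 < N" "v $ k0 \<noteq> 0" by blast
  show False
  proof (cases "N = 1")
    case True
    have "V 0 = 0\<^sub>v N"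
    proof (rule eq_vecI)
      fix k assume "k < dim_vec (0\<^sub>v N)"
      hence k: "k = 0" "k0 = 0" using True k0 by auto
      have "v $ 0 * V 0 $ 0 = 0" using orth[of 0] True by simp
      thus "V 0 $ k = 0\<^sub>v N $ k" using k k0 True by simp
    qed simp
    thus False using V_nonzero by auto
  next
    case False
    define l where "l = (if k0 = 0 then 1 else 0::nat)"
    have l: "l < N" "l \<noteq> k0" using k0 N_pos False unfolding l_def by auto
    define w where "w j = v $ j / v $ k0" for j
    have wk0: "w k0 = 1" unfolding w_def using k0 by simp
    define R where "R = mat N N (\<lambda>(i,j). (if i = j then 1 else 0) + (if i = k0 then w j else 0))"
    define Ri where "Ri = mat N N (\<lambda>(i,j). (if i = j then 1 else 0) - (if i = k0 then w j / 2 else 0))"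
    have R: "R \<in> carrier_mat N N" "Ri \<in> carrier_mat N N" unfolding R_def Ri_def by auto
    have RRi: "R * Ri = 1\<^sub>m N"
    proof (rule eq_matI)
      fix i j assume "i < dim_row (1\<^sub>m N :: real mat)" "j < dim_col (1\<^sub>m N :: real mat)"
      hence i: "i < N" and j: "j < N" by auto
      have "(R * Ri) $$ (i,j) = (\<Sum>c<N. R $$ (i,c) * Ri $$ (c,j))" by (rule mult_entry[OF R i j])
      also have "\<dots> = (\<Sum>c<N. (if c = i then (if i = j then 1 else 0) - (if i = k0 then w j / 2 else 0) else 0)
          + (if i = k0 then (if c = j then w c else 0) - (if c = k0 then w c * w j / 2 else 0) else 0))"
        (is "_ = (\<Sum>c<N. ?RHS c)")
      proof (rule sum.cong)
        fix c assume "c \<in> {..<N}"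
        hence c: "c < N" by simp
        show "R $$ (i,c) * Ri $$ (c,j) = ?RHS c"
          using i j c by (cases "c = i"; cases "c = j"; cases "c = k0"; cases "i = k0"; simp add: R_def Ri_def algebra_simps add_divide_distrib)
      qed simp
      also have "\<dots> = ((if i = j then 1 else 0) - (if i = k0 then w j / 2 else 0))
          + (if i = k0 then w j - w k0 * w j / 2 else 0)"
        using i j k0 by (simp only: sum.distrib sum_if_const sum_subtractf sum.delta) simp
      also have "\<dots> = 1\<^sub>m N $$ (i,j)" using i j wk0 by auto
      finally show "(R * Ri) $$ (i,j) = 1\<^sub>m N $$ (i,j)" .
    qed (use R in auto)
    have RiR: "Ri * R = 1\<^sub>m N"
    proof (rule eq_matI)
      fix i j assume "i < dim_row (1\<^sub>m N :: real mat)" "j < dim_col (1\<^sub>m N :: real mat)"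
      hence i: "i < N" and j: "j < N" by auto
      have "(Ri * R) $$ (i,j) = (\<Sum>c<N. Ri $$ (i,c) * R $$ (c,j))" by (rule mult_entry[OF R(2) R(1) i j])
      also have "\<dots> = (\<Sum>c<N. (if c = i then (if i = j then 1 else 0) + (if i = k0 then w j else 0) else 0)
          - (if i = k0 then (if c = j then w c / 2 else 0) + (if c = k0 then w c / 2 * w j else 0) else 0))"
        (is "_ = (\<Sum>c<N. ?RHS c)")
      proof (rule sum.cong)
        fix c assume "c \<in> {..<N}"
        hence c: "c < N" by simp
        show "Ri $$ (i,c) * R $$ (c,j) = ?RHS c"
          using i j c by (cases "c = i"; cases "c = j"; cases "c = k0"; cases "i = k0"; simp add: R_def Ri_def algebra_simps add_divide_distrib)
      qed simp
      also have "\<dots> = ((if i = j then 1 else 0) + (if i = k0 then w j else 0))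
          - (if i = k0 then w j / 2 + w k0 / 2 * w j else 0)"
        using i j k0 by (simp only: sum.distrib sum_if_const sum_subtractf sum.delta) simp
      also have "\<dots> = 1\<^sub>m N $$ (i,j)" using i j wk0 by auto
      finally show "(Ri * R) $$ (i,j) = 1\<^sub>m N $$ (i,j)" .
    qed (use R in auto)
    have RV: "R *\<^sub>v V i = V i" for i
    proof (rule eq_vecI)
      fix k assume "k < dim_vec (V i)"
      hence k: "k < N" by simp
      have "(R *\<^sub>v V i) $ k = (\<Sum>c<N. R $$ (k,c) * V i $ c)"
        using k R by (simp add: scalar_prod_def atLeast0LessThan)
      also have "\<dots> = (\<Sum>c<N. (if c = k then V i $ c else 0) + (if k = k0 then v $ c * V i $ c / v $ k0 else 0))"
        by (rule sum.cong) (use k in \<open>auto simp: R_def w_def algebra_simps\<close>)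
      also have "\<dots> = V i $ k + (if k = k0 then (\<Sum>c<N. v $ c * V i $ c) / v $ k0 else 0)"
        using k by (simp add: sum.distrib sum_divide_distrib[symmetric])
      also have "\<dots> = V i $ k" using orth by simp
      finally show "(R *\<^sub>v V i) $ k = V i $ k" .
    qed (use R in auto)
    obtain Mi where Mi: "Mi \<in> carrier_mat N N" "M * Mi = 1\<^sub>m N" "Mi * M = 1\<^sub>m N"
      using inv_of_invertible[OF M_car M_inv] by blast
    have MR: "M * R \<in> carrier_mat N N" using M_car R by auto
    have inv: "invertible_mat (M * R)"
    proof (rule invertible_of_inverse[OF MR, of "Ri * Mi"])
      show "Ri * Mi \<in> carrier_mat N N" using R Mi by auto
      have "R * (Ri * Mi) = (R * Ri) * Mi" using assoc_mult_mat[OF R(1) R(2) Mi(1)] by simp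
      hence e1: "R * (Ri * Mi) = Mi" using RRi Mi by simp
      have "M * R * (Ri * Mi) = M * (R * (Ri * Mi))"
        using assoc_mult_mat[OF M_car R(1), of "Ri * Mi" N] R Mi by simp
      thus "M * R * (Ri * Mi) = 1\<^sub>m N" unfolding e1 using Mi by simp
      have "Mi * (M * R) = (Mi * M) * R" using assoc_mult_mat[OF Mi(1) M_car R(1)] by simp
      hence e2: "Mi * (M * R) = R" using Mi R by simp
      have "Ri * Mi * (M * R) = Ri * (Mi * (M * R))"
        using assoc_mult_mat[OF R(2) Mi(1), of "M * R" N] M_car R by simp
      thus "Ri * Mi * (M * R) = 1\<^sub>m N" unfolding e2 using RiR by simp
    qed
    have tw: "twisted_monodromy n V (M * R)"
      unfolding twisted_monodromy_def
    proof
      fix i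
      from twisted obtain \<mu> where "\<mu> \<noteq> 0" "V (i + int n) = \<mu> \<cdot>\<^sub>v (M *\<^sub>v V i)"
        unfolding twisted_monodromy_def by blast
      moreover have "(M * R) *\<^sub>v V i = M *\<^sub>v V i" using M_car R RV by simp
      ultimately show "\<exists>\<mu>. \<mu> \<noteq> 0 \<and> V (i + int n) = \<mu> \<cdot>\<^sub>v ((M * R) *\<^sub>v V i)" by auto
    qed
    from generic MR inv tw obtain c where c: "c \<noteq> 0" "M * R = c \<cdot>\<^sub>m M" by blast
    have "Mi * (M * R) = (Mi * M) * R" using assoc_mult_mat[OF Mi(1) M_car R(1)] by simp
    hence "R = Mi * (M * R)" using Mi R by simp
    also have "\<dots> = c \<cdot>\<^sub>m (Mi * M)" unfolding c(2) using mult_smult_distrib[OF Mi(1) M_car] by simp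
    finally have Rc: "R = c \<cdot>\<^sub>m 1\<^sub>m N" using Mi by simp
    have "R $$ (l,l) = 1" "R $$ (k0,k0) = 2" using l k0 wk0 unfolding R_def by auto
    thus False using Rc l k0 by simp
  qed
qed

end



context Mono begin

definition G0 :: "real mat" where "G0 = mat N N (\<lambda>(k,c). V (tpos c) $ k)"
definition G1 :: "real mat" where "G1 = mat N N (\<lambda>(k,s). V (tpos (n + s)) $ k)"

lemma G0_car: "G0 \<in> carrier_mat N N" unfolding G0_def by simp
lemma G1_car: "G1 \<in> carrier_mat N N" unfolding G1_def by simp

lemma coord_sol: "k < N \<Longrightarrow> (\<Sum>j\<in>J. a j i * V (i + j) $ k) = 0"
  using ann unfolding annihilates_def by simp

lemma G1_eq: "G1 = G0 * transpose_mat Ar"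
proof (rule eq_matI)
  fix k s assume "k < dim_row (G0 * transpose_mat Ar)" "s < dim_col (G0 * transpose_mat Ar)"
  hence k: "k < N" and s: "s < N" using G0_car Ar_carrier by auto
  have "(G0 * transpose_mat Ar) $$ (k,s) = (\<Sum>c<N. G0 $$ (k,c) * transpose_mat Ar $$ (c,s))"
    by (rule mult_entry[OF G0_car _ k s]) (use Ar_carrier in auto)
  also have "\<dots> = (\<Sum>c<N. Ar $$ (s,c) * V (tpos c) $ k)"
    by (rule sum.cong) (use k s Ar_carrier in \<open>auto simp: G0_def\<close>)
  also have "\<dots> = V (tpos (n + s)) $ k"
    by (rule solution_window[symmetric, OF coord_sol[OF k] s])
  finally show "G1 $$ (k,s) = (G0 * transpose_mat Ar) $$ (k,s)" using k s by (simp add: G1_def)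
qed (use G0_car Ar_carrier in \<open>auto simp: G1_def\<close>)

lemma det_G0: "det G0 \<noteq> 0"
proof
  assume "det G0 = 0"
  hence "det (transpose_mat G0) = 0" using det_transpose[OF G0_car] by simp
  then obtain v where v: "v \<in> carrier_vec N" "v \<noteq> 0\<^sub>v N" "transpose_mat G0 *\<^sub>v v = 0\<^sub>v N"
    using det_0_iff_vec_prod_zero[of "transpose_mat G0" N] G0_car by auto
  define y where "y i = (\<Sum>k<N. v $ k * V i $ k)" for i
  have "y t = 0" for t
  proof (rule sol_uniq)
    show "(\<Sum>j\<in>J. a j i * y (i + j)) = 0" for i unfolding y_def by (rule sol_comb)
    fix c assume c: "c < N"
    have "(transpose_mat G0 *\<^sub>v v) $ c = 0" using v(3) c by simp
    moreover have "(transpose_mat G0 *\<^sub>v v) $ c = y (tpos c)"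
      using c v(1) G0_car by (simp add: y_def G0_def scalar_prod_def atLeast0LessThan mult.commute)
    ultimately show "y (tpos c) = 0" by simp
  qed
  thus False using hyperplane_contra[OF v(1,2)] unfolding y_def by blast
qed

definition mu :: "int \<Rightarrow> real" where
  "mu i = (SOME \<mu>. \<mu> \<noteq> 0 \<and> V (i + int n) = \<mu> \<cdot>\<^sub>v (M *\<^sub>v V i))"

lemma mu: "mu i \<noteq> 0" "V (i + int n) = mu i \<cdot>\<^sub>v (M *\<^sub>v V i)"
  using someI_ex[of "\<lambda>\<mu>. \<mu> \<noteq> 0 \<and> V (i + int n) = \<mu> \<cdot>\<^sub>v (M *\<^sub>v V i)"] twisted
  unfolding twisted_monodromy_def mu_def by blast+

definition Lam :: "real mat" where "Lam = mat N N (\<lambda>(i,j). if i = j then mu (tpos j) else 0)"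

lemma Lam_car: "Lam \<in> carrier_mat N N" unfolding Lam_def by simp

lemma det_Lam: "det Lam \<noteq> 0"
proof -
  have "det Lam = prod_list (diag_mat Lam)"
    by (rule det_lower_triangular[OF _ Lam_car]) (simp add: Lam_def)
  also have "\<dots> = (\<Prod>j<N. mu (tpos j))" unfolding diag_mat_def using Lam_car
    by (simp add: prod_list_upt_map Lam_def)
  finally show ?thesis using mu(1) by simp
qed

lemma G1_M: "G1 = (M * G0) * Lam"
proof (rule eq_matI)
  fix k s assume "k < dim_row (M * G0 * Lam)" "s < dim_col (M * G0 * Lam)"
  hence k: "k < N" and s: "s < N" using M_car Lam_car by auto
  have MG0: "M * G0 \<in> carrier_mat N N" using M_car G0_car by simp
  have "(M * G0 * Lam) $$ (k,s) = (\<Sum>c<N. (M * G0) $$ (k,c) * Lam $$ (c,s))"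
    by (rule mult_entry[OF MG0 Lam_car k s])
  also have "\<dots> = (\<Sum>c<N. if c = s then (M * G0) $$ (k,c) * mu (tpos s) else 0)"
    by (rule sum.cong) (use s in \<open>auto simp: Lam_def\<close>)
  also have "\<dots> = (M * G0) $$ (k,s) * mu (tpos s)" using s by simp
  also have "(M * G0) $$ (k,s) = (M *\<^sub>v V (tpos s)) $ k"
    using k s M_car G0_car by (simp add: G0_def scalar_prod_def atLeast0LessThan)
  also have "(M *\<^sub>v V (tpos s)) $ k * mu (tpos s) = V (tpos s + int n) $ k"
    using mu(2)[of "tpos s"] k M_car by simp
  also have "tpos s + int n = tpos (n + s)" unfolding tpos_def by simp
  finally show "G1 $$ (k,s) = (M * G0 * Lam) $$ (k,s)" using k s by (simp add: G1_def)
qed (use M_car Lam_car in \<open>auto simp: G1_def\<close>)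

lemma det_M: "det M \<noteq> 0"
proof -
  obtain Mi where Mi: "Mi \<in> carrier_mat N N" "M * Mi = 1\<^sub>m N" "Mi * M = 1\<^sub>m N"
    using inv_of_invertible[OF M_car M_inv] by blast
  have "det M * det Mi = 1" using det_mult[OF M_car Mi(1)] Mi(2) by simp
  thus ?thesis by auto
qed

lemma det_G1: "det G1 \<noteq> 0"
  unfolding G1_M using det_mult[OF mult_carrier_mat[OF M_car G0_car] Lam_car] det_mult[OF M_car G0_car]
    det_M det_G0 det_Lam by simp

end



context Mono begin

definition G0inv :: "real mat" where
  "G0inv = (SOME B. B \<in> carrier_mat N N \<and> G0 * B = 1\<^sub>m N \<and> B * G0 = 1\<^sub>m N)"

lemma G0inv: "G0inv \<in> carrier_mat N N" "G0 * G0inv = 1\<^sub>m N" "G0inv * G0 = 1\<^sub>m N"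
  using someI_ex[OF det_nz_inverse[OF G0_car det_G0]] unfolding G0inv_def by auto

definition Bm :: "real mat" where "Bm = G1 * G0inv"

lemma Bm_car: "Bm \<in> carrier_mat N N" unfolding Bm_def using G1_car G0inv by simp

lemma BmG0: "Bm * G0 = G1"
proof -
  have "Bm * G0 = G1 * (G0inv * G0)" unfolding Bm_def using assoc_mult_mat[OF G1_car G0inv(1) G0_car] .
  thus ?thesis using G0inv G1_car by simp
qed

lemma Bm_inv: "invertible_mat Bm"
proof -
  have "det Bm = det G1 * det G0inv" unfolding Bm_def by (rule det_mult[OF G1_car G0inv(1)])
  moreover have "det G0 * det G0inv = 1" using det_mult[OF G0_car G0inv(1)] G0inv(2) by simp
  ultimately have "det Bm \<noteq> 0" using det_G1 by auto
  from det_nz_inverse[OF Bm_car this] obtain B where "B \<in> carrier_mat N N" "Bm * B = 1\<^sub>m N" "B * Bm = 1\<^sub>m N"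
    by blast
  thus ?thesis using invertible_of_inverse[OF Bm_car] by blast
qed

lemma Bm_window: assumes c: "c < N" shows "Bm *\<^sub>v V (tpos c) = V (tpos c + int n)"
proof -
  have "col G0 c = V (tpos c)" by (rule eq_vecI) (use c in \<open>auto simp: G0_def\<close>)
  moreover have "col G1 c = V (tpos c + int n)"
    by (rule eq_vecI) (use c in \<open>auto simp: G1_def tpos_def add_ac\<close>)
  moreover have "col (Bm * G0) c = Bm *\<^sub>v col G0 c" by (rule col_mult2[OF Bm_car G0_car c])
  ultimately show ?thesis using BmG0 by simp
qed

lemma a_per': "j \<in> J \<Longrightarrow> a j (i + int n) = a j i"
  using a_per unfolding periodic_seq_def by blast

lemma Bm_all: "V (i + int n) = Bm *\<^sub>v V i"
proof (rule eq_vecI)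
  fix k assume "k < dim_vec (Bm *\<^sub>v V i)"
  hence k: "k < N" using Bm_car by simp
  define y where "y t = V (t + int n) $ k - (\<Sum>l<N. Bm $$ (k,l) * V t $ l)" for t
  have "y t = 0" for t
  proof (rule sol_uniq)
    fix i
    have "(\<Sum>j\<in>J. a j i * y (i + j)) = (\<Sum>j\<in>J. a j i * V (i + j + int n) $ k)
         - (\<Sum>j\<in>J. a j i * (\<Sum>l<N. Bm $$ (k,l) * V (i + j) $ l))"
      unfolding y_def by (simp add: right_diff_distrib sum_subtractf)
    also have "(\<Sum>j\<in>J. a j i * V (i + j + int n) $ k) = (\<Sum>j\<in>J. a j (i + int n) * V ((i + int n) + j) $ k)"
      by (rule sum.cong) (auto simp: a_per' add_ac)
    also have "\<dots> = 0" by (rule coord_sol[OF k])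
    also have "(\<Sum>j\<in>J. a j i * (\<Sum>l<N. Bm $$ (k,l) * V (i + j) $ l)) = 0" by (rule sol_comb)
    finally show "(\<Sum>j\<in>J. a j i * y (i + j)) = 0" by simp
  next
    fix c assume c: "c < N"
    have "(Bm *\<^sub>v V (tpos c)) $ k = (\<Sum>l<N. Bm $$ (k,l) * V (tpos c) $ l)"
      using k Bm_car by (simp add: scalar_prod_def atLeast0LessThan)
    thus "y (tpos c) = 0" unfolding y_def using Bm_window[OF c] by simp
  qed
  hence "V (i + int n) $ k = (\<Sum>l<N. Bm $$ (k,l) * V i $ l)" using y_def by (metis eq_iff_diff_eq_0)
  also have "\<dots> = (Bm *\<^sub>v V i) $ k" using k Bm_car by (simp add: scalar_prod_def atLeast0LessThan)
  finally show "V (i + int n) $ k = (Bm *\<^sub>v V i) $ k" .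
qed (use Bm_car in simp)

lemma main_mono: "\<exists>c. c \<noteq> 0 \<and> char_poly (c \<cdot>\<^sub>m M) = char_poly Ar"
proof -
  have "twisted_monodromy n V Bm" unfolding twisted_monodromy_def
    using Bm_all by (intro allI exI[of _ 1]) simp
  with generic Bm_car Bm_inv obtain c where c: "c \<noteq> 0" "Bm = c \<cdot>\<^sub>m M" by blast
  have TA: "transpose_mat Ar \<in> carrier_mat N N" using Ar_carrier by simp
  have "Bm = G0 * transpose_mat Ar * G0inv" unfolding Bm_def G1_eq ..
  hence "similar_mat Bm (transpose_mat Ar)"
    by (intro similar_matI[of Bm "transpose_mat Ar" G0 G0inv N]) (use Bm_car TA G0_car G0inv in auto)
  hence "char_poly Bm = char_poly (transpose_mat Ar)" by (rule char_poly_similar)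
  also have "\<dots> = char_poly Ar" using Ar_carrier by simp
  finally show ?thesis using c by auto
qed

end



context DOset begin

lemma key_identity: "det Dsh * ((-1) ^ N * det Qb) = char_poly Acx * (det Tp * det Gt)"
proof -
  have e1: "det Lp * det Gt = det Dsh * (-1) ^ N"
    using det_mult[OF Lp_carrier Q2_carrier] det_LpQ2 det_Q2 by simp
  have e2: "det Lp * det Qb = det Tp * char_poly Acx"
    using det_mult[OF Lp_carrier Qb_carrier] det_LpQb by simp
  have "det Dsh * ((-1) ^ N * det Qb) = (det Lp * det Gt) * det Qb" using e1 by (simp add: ac_simps)
  also have "\<dots> = (det Lp * det Qb) * det Gt" by (simp add: ac_simps)
  also have "\<dots> = char_poly Acx * (det Tp * det Gt)" unfolding e2 by (simp add: ac_simps)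
  finally show ?thesis .
qed

lemma char_poly_Acx_nz: "char_poly Acx \<noteq> 0"
  using degree_monic_char_poly[OF Acx_carrier] by auto

lemma det_Dsh_nz: "det Dsh \<noteq> 0"
proof
  assume "det Dsh = 0"
  hence "char_poly Acx * (det Tp * det Gt) = 0" using key_identity by simp
  thus False using char_poly_Acx_nz det_Tp_nz det_Gt(1) by simp
qed

lemma key_order: assumes y: "y \<noteq> 0" shows "order y (det Dsh) = order y (char_poly Acx)"
proof -
  have nz1: "det Dsh * ((-1) ^ N * det Qb) \<noteq> 0"
    using det_Dsh_nz det_Qb_poly[of 0] by auto
  have nz2: "(-1) ^ N * det Qb \<noteq> 0" using nz1 by auto
  have nz3: "char_poly Acx * (det Tp * det Gt) \<noteq> 0" using nz1 key_identity by simp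
  have nz4: "det Tp * det Gt \<noteq> 0" using nz3 by auto
  have "order y (det Dsh * ((-1) ^ N * det Qb)) = order y (det Dsh)"
  proof -
    have "poly ((-1) ^ N * det Qb) y \<noteq> 0" using det_Qb_poly by simp
    hence "order y ((-1) ^ N * det Qb) = 0" by (rule order_0I)
    thus ?thesis using order_mult[OF nz1] by simp
  qed
  moreover have "order y (char_poly Acx * (det Tp * det Gt)) = order y (char_poly Acx)"
  proof -
    have "poly (det Tp * det Gt) y \<noteq> 0" using det_Tp_poly det_Gt(2)[OF y] by simp
    hence "order y (det Tp * det Gt) = 0" by (rule order_0I)
    thus ?thesis using order_mult[OF nz3] by simp
  qed
  ultimately show ?thesis using key_identity by simp
qed

end



theorem mainTheorem4:
  fixes J :: "int set" and n :: nat
    and a :: "int \<Rightarrow> int \<Rightarrow> real"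
    and V :: "int \<Rightarrow> real vec"
    and M :: "real mat"
  assumes J: "finite J" "2 \<le> card J"
    and n: "1 \<le> n"
    and a_periodic: "\<forall>j\<in>J. periodic_seq n (a j)"
    and V_dim: "\<forall>i. V i \<in> carrier_vec (lift_dim J)"
    and V_nonzero: "\<forall>i. V i \<noteq> 0\<^sub>v (lift_dim J)"
    and M_proj: "M \<in> carrier_mat (lift_dim J) (lift_dim J)" "invertible_mat M"
    and twisted: "twisted_monodromy n V M"
    and corr: "corrugated J (lift_dim J) V"
    and corresponds: "annihilates J a (lift_dim J) V"
    and generic_ends: "\<forall>i. a (Min J) i \<noteq> 0 \<and> a (Max J) i \<noteq> 0"
    and generic_monodromy: "\<forall>M'. M' \<in> carrier_mat (lift_dim J) (lift_dim J) \<longrightarrow>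
            invertible_mat M' \<longrightarrow> twisted_monodromy n V M' \<longrightarrow>
            (\<exists>c. c \<noteq> 0 \<and> M' = c \<cdot>\<^sub>m M)"
  shows "det_DO_poly J a n \<noteq> 0 \<and>
         (\<exists>c::complex. c \<noteq> 0 \<and>
            eigenvalues_mset M = image_mset (\<lambda>z. c * z) (roots_det_DO J a n))"
proof -
  interpret Mono J n a V M
    using J n a_periodic V_dim V_nonzero M_proj twisted corresponds generic_ends generic_monodromy
    by (unfold_locales) auto
  obtain c where c: "c \<noteq> 0" "char_poly (c \<cdot>\<^sub>m M) = char_poly Ar" using main_mono by blast
  define Mc where "Mc = map_mat complex_of_real M"
  define k where "k = complex_of_real c"
  have k: "k \<noteq> 0" using c unfolding k_def by simp
  have Mc: "Mc \<in> carrier_mat N N" unfolding Mc_def using M_car by simp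
  have "char_poly Acx = map_poly complex_of_real (char_poly Ar)"
    unfolding Acx_def by (rule of_real_hom.char_poly_hom[OF Ar_carrier])
  also have "\<dots> = map_poly complex_of_real (char_poly (c \<cdot>\<^sub>m M))" using c by simp
  also have "\<dots> = char_poly (map_mat complex_of_real (c \<cdot>\<^sub>m M))"
    by (rule of_real_hom.char_poly_hom[symmetric, of _ N]) (use M_car in simp)
  also have "map_mat complex_of_real (c \<cdot>\<^sub>m M) = k \<cdot>\<^sub>m Mc"
    unfolding Mc_def k_def by (rule eq_matI) auto
  finally have cA: "char_poly Acx = char_poly (k \<cdot>\<^sub>m Mc)" .
  have ord: "order x (char_poly Acx) = order (x / k) (char_poly Mc)" for x
    unfolding cA by (rule order_char_poly_smult[OF Mc k])
  have cMc: "char_poly Mc \<noteq> 0" using degree_monic_char_poly[OF Mc] by auto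
  have ord0: "order 0 (char_poly Mc) = 0"
  proof (rule order_0I)
    have "char_matrix Mc 0 = Mc" unfolding char_matrix_def by (rule eq_matI) (use Mc in auto)
    moreover have "det Mc \<noteq> 0" unfolding Mc_def using det_M by simp
    ultimately have "\<not> eigenvalue Mc 0" using eigenvalue_det[OF Mc] by simp
    thus "poly (char_poly Mc) 0 \<noteq> 0" using eigenvalue_root_char_poly[OF Mc] by simp
  qed
  have D: "det_DO_poly J a n = det Dsh" unfolding det_DO_poly_def ..
  have Dnz: "det_DO_poly J a n \<noteq> 0" unfolding D by (rule det_Dsh_nz)
  have "eigenvalues_mset M = image_mset (\<lambda>z. (1 / k) * z) (roots_det_DO J a n)"
  proof (rule multiset_eqI)
    fix y
    have pre: "(\<lambda>z. (1 / k) * z) -` {y} = {k * y}" using k by (auto simp: field_simps)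
    have "count (image_mset (\<lambda>z. (1 / k) * z) (roots_det_DO J a n)) y = count (roots_det_DO J a n) (k * y)"
      unfolding count_image_mset pre by (cases "k * y \<in># roots_det_DO J a n") (auto simp: not_in_iff)
    also have "\<dots> = (if y \<noteq> 0 then order (k * y) (det Dsh) else 0)"
      unfolding roots_det_DO_def D using k det_Dsh_nz by auto
    also have "\<dots> = order y (char_poly Mc)"
    proof (cases "y = 0")
      case True thus ?thesis using ord0 by simp
    next
      case False
      have "order (k * y) (det Dsh) = order (k * y) (char_poly Acx)"
        by (rule key_order) (use k False in simp)
      also have "\<dots> = order y (char_poly Mc)" unfolding ord using k by simp
      finally show ?thesis using False by simp
    qed
    also have "\<dots> = count (eigenvalues_mset M) y"
      unfolding eigenvalues_mset_def Mc_def[symmetric] using cMc by simp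
    finally show "count (eigenvalues_mset M) y = count (image_mset (\<lambda>z. (1 / k) * z) (roots_det_DO J a n)) y" by simp
  qed
  thus ?thesis using Dnz k by (intro conjI exI[of _ "1 / k"]) auto
qed



end
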